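(* Let $G_1$ be a $(q_1,q_2)$-semi-regular bipartite graph with bipartition $V_1,V_2$, $|V_1|=n_1\le n_2=|V_2|$, $\nu_1=n_1+n_2$, and let $G_2$ be a $(q_3,q_4)$-semi-regular bipartite graph with bipartition $V_3,V_4$, $|V_3|=n_3\le n_4=|V_4|$, $\nu_2=n_3+n_4$. Write $spec(G_1)=\{\pm\lambda_1,\dots,\pm\lambda_{k_1},0^{(\nu_1-2k_1)}\}$ and $spec(G_2)=\{\pm\mu_1,\dots,\pm\mu_{k_2},0^{(\nu_2-2k_2)}\}$ where $k_1,k_2$ are the numbers of positive eigenvalues, $\sqrt{q_1q_2}=\lambda_1\ge\dots\ge\lambda_{k_1}>0$, $\sqrt{q_3q_4}=\mu_1\ge\dots\ge\mu_{k_2}>0$. Then the number of spanning trees of $G=G_1\vee G_2$ is $$\tau(G)=(q_1+q_2+\nu_2)(q_3+q_4+\nu_1)(q_1+\nu_2)^{n_1-k_1}(q_2+\nu_2)^{n_2-k_1}(q_3+\nu_1)^{n_3-k_2}(q_4+\nu_1)^{n_4-k_2}\prod_{i=2}^{k_1}\big[(q_1+\nu_2)(q_2+\nu_2)-\lambda_i^2\big]\prod_{j=2}^{k_2}\big[(q_3+\nu_1)(q_4+\nu_1)-\mu_j^2\big].$$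
   Context: A bipartite graph with bipartition $(V_1,V_2)$ is $(q_1,q_2)$-semi-regular if every vertex of $V_1$ has degree $q_1$ and every vertex of $V_2$ has degree $q_2$ ($q_1,q_2\ge1$). The join $G_1\vee G_2$ has vertex set $V(G_1)\sqcup V(G_2)$ and edge set $E(G_1)\cup E(G_2)\cup\{uv:u\in V(G_1),v\in V(G_2)\}$. $spec$ denotes the multiset of adjacency eigenvalues (exponents in parentheses denote multiplicities); $\tau(G)$ is the number of spanning trees of $G$. *)

theory Defs
  imports "HOL-Analysis.Analysis" "HOL-Computational_Algebra.Polynomial"
begin

text \<open>Simple graphs on a finite vertex type: the vertex set is UNIV, the edges are given
by a symmetric irreflexive relation E.\<close>

definition simple_graph :: "('a \<Rightarrow> 'a \<Rightarrow> bool) \<Rightarrow> bool" where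
  "simple_graph E \<longleftrightarrow> (\<forall>u v. E u v \<longrightarrow> E v u) \<and> (\<forall>u. \<not> E u u)"

definition degree :: "('a::finite \<Rightarrow> 'a \<Rightarrow> bool) \<Rightarrow> 'a \<Rightarrow> nat" where
  "degree E v = card {u. E v u}"

definition semiregular_bipartite ::
  "('a::finite \<Rightarrow> 'a \<Rightarrow> bool) \<Rightarrow> 'a set \<Rightarrow> 'a set \<Rightarrow> nat \<Rightarrow> nat \<Rightarrow> bool" where
  "semiregular_bipartite E V1 V2 q1 q2 \<longleftrightarrow>
     simple_graph E \<and> V1 \<union> V2 = UNIV \<and> V1 \<inter> V2 = {} \<and>
     (\<forall>u v. E u v \<longrightarrow> (u \<in> V1 \<and> v \<in> V2) \<or> (u \<in> V2 \<and> v \<in> V1)) \<and>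
     q1 \<ge> 1 \<and> q2 \<ge> 1 \<and>
     (\<forall>v\<in>V1. degree E v = q1) \<and> (\<forall>v\<in>V2. degree E v = q2)"

definition join :: "('a \<Rightarrow> 'a \<Rightarrow> bool) \<Rightarrow> ('b \<Rightarrow> 'b \<Rightarrow> bool) \<Rightarrow> ('a + 'b) \<Rightarrow> ('a + 'b) \<Rightarrow> bool" where
  "join E1 E2 x y = (case (x, y) of
      (Inl a, Inl b) \<Rightarrow> E1 a b
    | (Inr a, Inr b) \<Rightarrow> E2 a b
    | _ \<Rightarrow> True)"

definition adjacency :: "('a::finite \<Rightarrow> 'a \<Rightarrow> bool) \<Rightarrow> real^'a^'a" where
  "adjacency E = (\<chi> i j. if E i j then 1 else 0)"

definition charpoly :: "real^'n^'n \<Rightarrow> real poly" where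
  "charpoly A = det (\<chi> i j. (if i = j then [:0, 1:] else 0) - [:A $ i $ j:])"

definition spec :: "('a::finite \<Rightarrow> 'a \<Rightarrow> bool) \<Rightarrow> real multiset" where
  "spec E = proots (charpoly (adjacency E))"

definition edges :: "('a \<Rightarrow> 'a \<Rightarrow> bool) \<Rightarrow> 'a set set" where
  "edges E = {{u, v} | u v. E u v}"

definition connected_edges :: "'a set set \<Rightarrow> bool" where
  "connected_edges T \<longleftrightarrow> (\<forall>u v. (u, v) \<in> {(x, y). {x, y} \<in> T}\<^sup>*)"

definition has_cycle :: "'a set set \<Rightarrow> bool" where
  "has_cycle T \<longleftrightarrow> (\<exists>vs. length vs \<ge> 3 \<and> distinct vs \<and>
      (\<forall>i < length vs. {vs ! i, vs ! ((i + 1) mod length vs)} \<in> T))"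

definition spanning_tree :: "('a \<Rightarrow> 'a \<Rightarrow> bool) \<Rightarrow> 'a set set \<Rightarrow> bool" where
  "spanning_tree E T \<longleftrightarrow> T \<subseteq> edges E \<and> connected_edges T \<and> \<not> has_cycle T"

definition num_spanning_trees :: "('a \<Rightarrow> 'a \<Rightarrow> bool) \<Rightarrow> nat" where
  "num_spanning_trees E = card {T. spanning_tree E T}"

end

theory Submission
  imports Defs "HOL-Library.Transitive_Closure_Table"
begin


definition ev :: "'n::finite \<Rightarrow> real^'n" where "ev i = (\<chi> j. if j = i then 1 else 0)"
definition onev :: "real^'n::finite" where "onev = (\<chi> j. 1)"

lemma det_tri:
  fixes A :: "real^'n::finite^'n" and h :: "'n \<Rightarrow> nat"
  assumes "\<And>i j. A$i$j \<noteq> 0 \<Longrightarrow> i = j \<or> h j < h i"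
  shows "det A = (\<Prod>i\<in>UNIV. A$i$i)"
proof -
  let ?P = "{p. p permutes (UNIV::'n set)}"
  let ?t = "\<lambda>p. of_int (sign p) * (\<Prod>i\<in>UNIV. A $ i $ p i)"
  have z: "?t p = 0" if p: "p \<in> ?P - {id}" for p
  proof (rule ccontr)
    assume "?t p \<noteq> 0"
    then have nz: "\<forall>i. A$i$p i \<noteq> 0" by auto
    hence le: "\<forall>i. h (p i) \<le> h i" using assms by (metis order.refl less_imp_le)
    from p obtain i0 where i0: "p i0 \<noteq> i0" by (auto simp: fun_eq_iff)
    hence lt: "h (p i0) < h i0" using nz assms by metis
    have "sum h UNIV = sum (h \<circ> p) UNIV" using p by (intro sum.permute) auto
    also have "\<dots> < sum h UNIV"
      using le lt by (intro sum_strict_mono_ex1) auto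
    finally show False by simp
  qed
  have "det A = (\<Sum>p\<in>?P. ?t p)" by (simp add: det_def)
  also have "\<dots> = ?t id + (\<Sum>p\<in>?P - {id}. ?t p)"
    by (subst sum.remove[of _ id]) (auto simp: permutes_id)
  also have "(\<Sum>p\<in>?P - {id}. ?t p) = 0" using z by (intro sum.neutral) auto
  finally show ?thesis by simp
qed

lemma det_kernel:
  fixes A :: "real^'n::finite^'n"
  assumes "A *v w = 0" "w \<noteq> 0"
  shows "det A = 0"
proof (rule ccontr)
  assume "det A \<noteq> 0"
  then have "invertible A" by (simp add: invertible_det_nz)
  then obtain B where B: "B ** A = mat 1" unfolding invertible_def by blast
  have "w = (B ** A) *v w" by (simp add: B)
  also have "\<dots> = 0" by (simp add: matrix_vector_mul_assoc[symmetric] assms)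
  finally show False using assms by simp
qed

lemma det_unit_cols:
  fixes P :: "real^'n::finite^'n"
  assumes "\<And>i j. j \<noteq> r \<Longrightarrow> P$i$j = (if i = j then 1 else 0)"
  shows "det P = P$r$r"
proof -
  have "det P = (\<Prod>i\<in>UNIV. P$i$i)"
    by (rule det_tri[where h="\<lambda>i. if i = r then 0 else 1"]) (metis assms less_numeral_extra(1))
  also have "\<dots> = P$r$r * (\<Prod>i\<in>UNIV-{r}. P$i$i)" by (subst prod.remove[of _ r]) auto
  also have "(\<Prod>i\<in>UNIV-{r}. P$i$i) = 1" using assms by (intro prod.neutral) auto
  finally show ?thesis by simp
qed

lemma det_unit_rows:
  fixes P :: "real^'n::finite^'n"
  assumes "\<And>i j. i \<noteq> r \<Longrightarrow> P$i$j = (if i = j then 1 else 0)"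
  shows "det P = P$r$r"
proof -
  have "det P = det (transpose P)" by simp
  also have "\<dots> = transpose P $r$r" by (rule det_unit_cols) (auto simp: transpose_def assms)
  finally show ?thesis by (simp add: transpose_def)
qed


lemma sum_rows_vec: "(\<Sum>j\<in>S. (x j :: real^'n)) $ k = (\<Sum>j\<in>S. x j $ k)"
  by (rule sum_component)

lemma det_rowsum:
  fixes A :: "real^'n::finite^'n"
  assumes S: "(\<Sum>j\<in>UNIV. row j A) = \<kappa> *s onev"
  shows "det A = \<kappa> * det (\<chi> i. if i = r then onev else row i A - t *s onev)"
proof -
  have "det A = det (\<chi> k. if k = r then row r A + (\<Sum>j\<in>UNIV-{r}. row j A) else row k A)"
  proof (rule det_row_span[symmetric])
    show "(\<Sum>j\<in>UNIV-{r}. row j A) \<in> vec.span {row j A |j. j \<noteq> r}"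
      by (intro vec.span_sum vec.span_base) auto
  qed
  also have "row r A + (\<Sum>j\<in>UNIV-{r}. row j A) = \<kappa> *s onev"
    using S by (simp add: sum.remove[of UNIV r])
  also have "det (\<chi> k. if k = r then \<kappa> *s onev else row k A) =
      \<kappa> * det (\<chi> k. if k = r then onev else row k A)"
    by (rule det_row_mul)
  also have "(\<chi> k. if k = r then onev else row k A) =
      (\<chi> i j. (if j = i then 1 else 0) + (if i \<noteq> r \<and> j = r then t else 0)) **
      (\<chi> i. if i = r then onev else row i A - t *s onev)" (is "_ = ?P ** ?M")
  proof -
    have "?P ** ?M = (\<chi> i. \<Sum>k\<in>UNIV. ?P$i$k *s ?M$k)" by (rule matrix_mul_sum_alt)
    also have "\<dots> = (\<chi> k. if k = r then onev else row k A)"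
    proof (rule vec_eq_iff[THEN iffD2], rule allI)
      fix i
      have "(\<Sum>k\<in>UNIV. ?P$i$k *s ?M$k) =
            (\<Sum>k\<in>UNIV. (if k = i then ?M$k else 0) + (if i \<noteq> r \<and> k = r then t *s ?M$k else 0))"
        by (intro sum.cong) (auto simp: vector_sadd_rdistrib)
      also have "\<dots> = ?M$i + (if i \<noteq> r then t *s ?M$r else 0)"
        by (simp add: sum.distrib)
      also have "\<dots> = (if i = r then onev else row i A)" by auto
      finally show "(\<chi> i. \<Sum>k\<in>UNIV. ?P$i$k *s ?M$k) $ i = (\<chi> k. if k = r then onev else row k A) $ i"
        by simp
    qed
    finally show ?thesis by simp
  qed
  also have "det (?P ** ?M) = det ?P * det ?M" by (rule det_mul)
  also have "det ?P = 1" by (subst det_unit_cols[of r]) auto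
  finally show ?thesis by simp
qed


definition lap :: "('n::finite \<Rightarrow> 'n \<Rightarrow> bool) \<Rightarrow> real^'n^'n" where
  "lap E = (\<chi> i j. (if i = j then real (degree E i) else 0) - (if E i j then 1 else 0))"

definition Jm :: "real^'n::finite^'n" where "Jm = (\<chi> i j. 1)"

lemma lap_rowsum:
  assumes "simple_graph E"
  shows "(\<Sum>j\<in>UNIV. lap E $ k $ j) = 0"
proof -
  have "(\<Sum>j\<in>UNIV. lap E $ k $ j) = (\<Sum>j\<in>UNIV. (if k = j then real (degree E k) else 0)) - (\<Sum>j\<in>UNIV. (if E k j then 1 else 0))"
    by (simp add: lap_def sum_subtractf)
  also have "\<dots> = real (degree E k) - real (card {j. E k j})"
    by (simp add: sum.If_cases)
  finally show ?thesis by (simp add: degree_def)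
qed

lemma lap_sym:
  assumes "simple_graph E"
  shows "lap E $ i $ j = lap E $ j $ i"
  using assms unfolding lap_def simple_graph_def by auto

lemma lap_mult_onev:
  assumes "simple_graph E"
  shows "lap E *v onev = 0"
  using lap_rowsum[OF assms] by (simp add: matrix_vector_mult_def onev_def vec_eq_iff)

lemma det_lapJ:
  assumes "simple_graph E"
  shows "det (lap E + Jm) = real CARD('n) * det (\<chi> i. if i = r then onev else row i (lap E :: real^'n::finite^'n))"
proof -
  have S: "(\<Sum>j\<in>UNIV. row j (lap E + Jm)) = real CARD('n) *s onev"
  proof (rule vec_eq_iff[THEN iffD2], rule allI)
    fix k
    have "(\<Sum>j\<in>UNIV. row j (lap E + Jm)) $ k = (\<Sum>j\<in>UNIV. lap E $ k $ j + 1)"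
      by (simp add: sum_component row_def Jm_def lap_sym[OF assms, of _ k])
    also have "\<dots> = real CARD('n)" by (simp add: sum.distrib lap_rowsum[OF assms])
    finally show "(\<Sum>j\<in>UNIV. row j (lap E + Jm)) $ k = (real CARD('n) *s onev) $ k"
      by (simp add: onev_def)
  qed
  have "det (lap E + Jm) = real CARD('n) * det (\<chi> i. if i = r then onev else row i (lap E + Jm) - 1 *s onev)"
    by (rule det_rowsum[OF S])
  also have "(\<chi> i. if i = r then onev else row i (lap E + Jm) - 1 *s onev) = (\<chi> i. if i = r then onev else row i (lap E))"
    by (simp add: vec_eq_iff row_def Jm_def onev_def)
  finally show ?thesis .
qed

lemma det_replace_row_ev:
  assumes "simple_graph E"
  shows "det (\<chi> i. if i = r then ev y else row i (lap E :: real^'n::finite^'n)) =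
         det (\<chi> i. if i = r then ev r else row i (lap E))"
proof -
  have "det (\<chi> i. if i = r then ev y + (- 1) *s ev r else row i (lap E)) =
        det (\<chi> i. if i = r then ev y else row i (lap E)) + det (\<chi> i. if i = r then (- 1) *s ev r else row i (lap E))"
    by (rule det_row_add)
  also have "det (\<chi> i. if i = r then (- 1) *s ev r else row i (lap E)) = - det (\<chi> i. if i = r then ev r else row i (lap E))"
    by (subst det_row_mul) simp
  also have "det (\<chi> i. if i = r then ev y + (- 1) *s ev r else row i (lap E)) = 0"
  proof (rule det_kernel[of _ onev])
    show "onev \<noteq> (0::real^'n)" by (simp add: onev_def vec_eq_iff)
    show "(\<chi> i. if i = r then ev y + (- 1) *s ev r else row i (lap E)) *v onev = 0"
      using lap_rowsum[OF assms]
      by (simp add: vec_eq_iff matrix_vector_mult_def onev_def ev_def row_def sum.distrib sum.If_cases sum_subtractf)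
  qed
  finally show ?thesis by simp
qed

lemma det_Mprime:
  assumes "simple_graph E"
  shows "det (\<chi> i. if i = r then onev else row i (lap E :: real^'n::finite^'n)) =
         real CARD('n) * det (\<chi> i. if i = r then ev r else row i (lap E))"
proof -
  have eq: "onev = (\<Sum>y\<in>UNIV. ev y :: real^'n)"
    by (simp add: vec_eq_iff onev_def ev_def sum_component)
  hence "det (\<chi> i. if i = r then onev else row i (lap E :: real^'n::finite^'n)) =
     det (\<chi> i. if i = r then (\<Sum>y\<in>UNIV. ev y) else row i (lap E :: real^'n::finite^'n))" by (simp only: eq)
  also have "\<dots> = (\<Sum>y\<in>UNIV. det (\<chi> i. if i = r then ev y else row i (lap E :: real^'n::finite^'n)))"
    by (rule det_linear_row_sum) simp
  also have "\<dots> = (\<Sum>y\<in>(UNIV::'n set). det (\<chi> i. if i = r then ev r else row i (lap E :: real^'n::finite^'n)))"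
    using det_replace_row_ev[OF assms] by (intro sum.cong) auto
  finally show ?thesis by simp
qed


definition reach :: "('n \<Rightarrow> 'n) \<Rightarrow> 'n \<Rightarrow> bool" where
  "reach f r \<longleftrightarrow> (\<forall>x. \<exists>n. (f ^^ n) x = r)"

definition depth :: "('n \<Rightarrow> 'n) \<Rightarrow> 'n \<Rightarrow> 'n \<Rightarrow> nat" where
  "depth f r x = (LEAST n. (f ^^ n) x = r)"

definition Fset :: "('n \<Rightarrow> 'n \<Rightarrow> bool) \<Rightarrow> 'n \<Rightarrow> ('n \<Rightarrow> 'n) set" where
  "Fset E r = {f. f r = r \<and> (\<forall>x. x \<noteq> r \<longrightarrow> E x (f x)) \<and> reach f r}"

lemma depth_r: "depth f r r = 0"
  unfolding depth_def by (rule Least_eq_0) simp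

lemma depth_step:
  assumes "reach f r" "x \<noteq> r"
  shows "depth f r (f x) + 1 = depth f r x"
proof -
  obtain n where n: "(f ^^ n) x = r" using assms unfolding reach_def by blast
  let ?d = "depth f r x"
  have d: "(f ^^ ?d) x = r" unfolding depth_def by (rule LeastI[of _ n]) (rule n)
  have "?d \<noteq> 0" using d assms by (metis funpow_0)
  then obtain d' where d': "?d = Suc d'" by (cases ?d) auto
  have "(f ^^ d') (f x) = r" using d d' by (simp add: funpow_Suc_right del: funpow.simps)
  hence le1: "depth f r (f x) \<le> d'" unfolding depth_def by (rule Least_le)
  obtain m where m: "(f ^^ m) (f x) = r" using assms unfolding reach_def by blast
  have dm: "(f ^^ depth f r (f x)) (f x) = r" unfolding depth_def by (rule LeastI[of _ m]) (rule m)
  hence "(f ^^ Suc (depth f r (f x))) x = r" by (simp add: funpow_Suc_right del: funpow.simps)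
  hence "?d \<le> Suc (depth f r (f x))" unfolding depth_def by (rule Least_le)
  with le1 d' show ?thesis by simp
qed

definition Nf :: "'n::finite \<Rightarrow> ('n \<Rightarrow> 'n) \<Rightarrow> real^'n^'n" where
  "Nf r f = (\<chi> i. if i = r then ev r else ev i - ev (f i))"

lemma det_Nf_reach:
  assumes "reach f r" "\<And>x. x \<noteq> r \<Longrightarrow> f x \<noteq> x"
  shows "det (Nf r f) = 1"
proof -
  have "det (Nf r f) = (\<Prod>i\<in>UNIV. Nf r f $ i $ i)"
  proof (rule det_tri[where h = "depth f r"])
    fix i j assume "Nf r f $ i $ j \<noteq> 0"
    hence "i = j \<or> (i \<noteq> r \<and> j = f i)" by (auto simp: Nf_def ev_def split: if_splits)
    thus "i = j \<or> depth f r j < depth f r i" using depth_step[OF assms(1)] by force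
  qed
  also have "\<dots> = 1" using assms(2) by (intro prod.neutral) (fastforce simp: Nf_def ev_def)
  finally show ?thesis .
qed

lemma ev_dot: "(\<Sum>j\<in>UNIV. ev a $ j * (w::real^'n::finite) $ j) = w $ a"
proof -
  have "\<And>j. ev a $ j * w $ j = (if a = j then w $ a else 0)" by (simp add: ev_def)
  thus ?thesis by simp
qed

lemma Nf_mult: "(Nf r f *v w) $ i = (if i = r then w$r else w$i - w$(f i))"
  by (auto simp: Nf_def matrix_vector_mult_def ev_dot left_diff_distrib sum_subtractf)

lemma det_Nf_noreach:
  fixes f :: "'n::finite \<Rightarrow> 'n"
  assumes "\<not> reach f r"
  shows "det (Nf r f) = 0"
proof -
  let ?B = "\<lambda>y. \<forall>n. (f ^^ n) y \<noteq> r"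
  let ?w = "(\<chi> y. if ?B y then 1 else 0) :: real^'n"
  obtain x where x: "?B x" using assms unfolding reach_def by blast
  have Bi: "?B i \<longleftrightarrow> ?B (f i)" if "i \<noteq> r" for i
  proof
    assume "?B i" thus "?B (f i)" by (metis funpow_Suc_right o_apply)
  next
    assume h: "?B (f i)"
    show "?B i"
    proof
      fix n show "(f ^^ n) i \<noteq> r" using h that by (cases n) (auto simp: funpow_Suc_right simp del: funpow.simps)
    qed
  qed
  show ?thesis
  proof (rule det_kernel[of _ ?w])
    show "?w \<noteq> 0" using x by (auto simp: vec_eq_iff intro!: exI[of _ x])
    have rB: "\<not> ?B r" by (metis funpow_0)
    show "Nf r f *v ?w = 0"
    proof (rule vec_eq_iff[THEN iffD2], rule allI)
      fix i
      have "(Nf r f *v ?w) $ i = (if i = r then ?w $ r else ?w $ i - ?w $ (f i))"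
        by (rule Nf_mult)
      also have "\<dots> = 0" using rB Bi by auto
      finally show "(Nf r f *v ?w) $ i = 0 $ i" by simp
    qed
  qed
qed


lemma lap_row_sum:
  assumes "simple_graph E" "i \<noteq> r"
  shows "row i (lap E :: real^'n::finite^'n) = (\<Sum>y\<in>UNIV. if E i y then ev i - ev y else 0)"
proof (rule vec_eq_iff[THEN iffD2], rule allI)
  fix j
  have "(\<Sum>y\<in>UNIV. if E i y then ev i - ev y else 0) $ j = (\<Sum>y\<in>UNIV. if E i y then (ev i - ev y) $ j else 0)"
    by (auto simp: sum_component intro!: sum.cong)
  also have "\<dots> = (\<Sum>y\<in>{y. E i y}. (ev i - ev y) $ j)"
    by (simp add: sum.If_cases Int_def)
  also have "\<dots> = (\<Sum>y\<in>{y. E i y}. (if j = i then 1 else 0) - (if j = y then 1 else 0))"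
    by (simp add: ev_def)
  also have "\<dots> = real (card {y. E i y}) * (if j = i then 1 else 0) - (if E i j then 1 else 0)"
    by (simp add: sum_subtractf sum.If_cases Int_def)
  also have "\<dots> = row i (lap E) $ j"
    using assms(1) by (auto simp: lap_def row_def degree_def simple_graph_def)
  finally show "row i (lap E) $ j = (\<Sum>y\<in>UNIV. if E i y then ev i - ev y else 0) $ j" by simp
qed

lemma det_rooted_lap:
  fixes E :: "'n::finite \<Rightarrow> 'n \<Rightarrow> bool"
  assumes E: "simple_graph E"
  shows "det (\<chi> i. if i = r then ev r else row i (lap E :: real^'n^'n)) = real (card (Fset E r))"
proof -
  define a where "a i y = (if i = r then (if y = r then ev r else 0) else (if E i y then ev i - ev y else 0 :: real^'n))" for i y
  have rows: "(\<chi> i. if i = r then ev r else row i (lap E :: real^'n^'n)) = (\<chi> i. \<Sum>y\<in>UNIV. a i y)"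
    using lap_row_sum[OF E] by (intro arg_cong[where f=vec_lambda] ext) (simp add: a_def)
  have "det (\<chi> i. \<Sum>y\<in>UNIV. a i y) = (\<Sum>f\<in>{f. \<forall>i. f i \<in> UNIV}. det (\<chi> i. a i (f i)))"
    by (rule det_linear_rows_sum) simp
  also have "\<dots> = (\<Sum>f\<in>UNIV. if f \<in> Fset E r then 1 else 0)"
  proof (rule sum.cong)
    fix f :: "'n \<Rightarrow> 'n"
    show "det (\<chi> i. a i (f i)) = (if f \<in> Fset E r then 1 else 0)"
    proof (cases "f r = r \<and> (\<forall>x. x \<noteq> r \<longrightarrow> E x (f x))")
      case False
      have "\<exists>x. a x (f x) = 0"
      proof (cases "f r = r")
        case True
        with False obtain x where "x \<noteq> r" "\<not> E x (f x)" by blast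
        thus ?thesis by (auto simp: a_def)
      next
        case False thus ?thesis by (auto simp: a_def)
      qed
      then obtain x where x: "row x (\<chi> i. a i (f i)) = 0"
        by (auto simp: row_def)
      hence "det (\<chi> i. a i (f i)) = 0" by (rule det_zero_row)
      thus ?thesis using False by (auto simp: Fset_def)
    next
      case True
      hence eq: "(\<chi> i. a i (f i)) = Nf r f" by (auto simp: a_def Nf_def vec_eq_iff)
      have ne: "\<And>x. x \<noteq> r \<Longrightarrow> f x \<noteq> x" using True E by (metis simple_graph_def)
      show ?thesis
      proof (cases "reach f r")
        case True
        thus ?thesis using eq det_Nf_reach[OF True ne] \<open>f r = r \<and> _\<close> by (simp add: Fset_def)
      next
        case False
        thus ?thesis using eq det_Nf_noreach[OF False] by (simp add: Fset_def)
      qed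
    qed
  qed simp
  also have "\<dots> = real (card (Fset E r))"
    by (simp add: sum.If_cases)
  finally show ?thesis using rows by simp
qed


definition Tof :: "'n \<Rightarrow> ('n \<Rightarrow> 'n) \<Rightarrow> 'n set set" where
  "Tof r f = {{x, f x} | x. x \<noteq> r}"

lemma mod_succ: "(i::nat) < m \<Longrightarrow> (Suc i) mod m = (if Suc i = m then 0 else Suc i)"
  by auto

lemma mod_pred: "(i::nat) < m \<Longrightarrow> (i + m - 1) mod m = (if i = 0 then m - 1 else i - 1)"
proof (cases i)
  case (Suc k)
  assume "i < m"
  hence "i + m - 1 = k + m" using Suc by simp
  thus ?thesis using Suc \<open>i < m\<close> by simp
qed simp

lemma Tof_edges:
  assumes "f \<in> Fset E r"
  shows "Tof r f \<subseteq> edges E"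
  using assms unfolding Tof_def Fset_def edges_def by blast

lemma Tof_conn:
  assumes "f \<in> Fset E r"
  shows "connected_edges (Tof r f)"
proof -
  let ?R = "{(x, y). {x, y} \<in> Tof r f}"
  have symR: "(x, y) \<in> ?R \<Longrightarrow> (y, x) \<in> ?R" for x y by (simp add: insert_commute)
  have tor: "(x, r) \<in> ?R\<^sup>*" if "(f ^^ n) x = r" for n x
    using that
  proof (induction n arbitrary: x)
    case 0 thus ?case by simp
  next
    case (Suc n)
    hence "(f x, r) \<in> ?R\<^sup>*" by (simp add: funpow_Suc_right del: funpow.simps)
    moreover have "x \<noteq> r \<Longrightarrow> (x, f x) \<in> ?R" by (auto simp: Tof_def)
    ultimately show ?case by (cases "x = r") (auto intro: converse_rtrancl_into_rtrancl)
  qed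
  have tor': "(x, r) \<in> ?R\<^sup>*" for x using assms tor unfolding Fset_def reach_def by blast
  have conv: "?R\<inverse> = ?R" using symR by auto
  have fromr: "(r, x) \<in> ?R\<^sup>*" for x
  proof -
    have "(x, r) \<in> (?R\<inverse>)\<^sup>*" using tor' conv by simp
    thus ?thesis by (simp add: rtrancl_converse)
  qed
  show ?thesis unfolding connected_edges_def using tor' fromr by (meson rtrancl_trans)
qed

lemma Tof_key:
  assumes "f \<in> Fset E r" "{v, z} \<in> Tof r f" "depth f r z \<le> depth f r v"
  shows "z = f v \<and> v \<noteq> r"
proof -
  have rf: "reach f r" using assms(1) by (simp add: Fset_def)
  from assms(2) obtain x where x: "x \<noteq> r" "{v, z} = {x, f x}" by (auto simp: Tof_def)
  show ?thesis
  proof (cases "x = v")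
    case True thus ?thesis using x by (auto simp: doubleton_eq_iff)
  next
    case False
    hence "x = z" "f x = v" using x by (auto simp: doubleton_eq_iff)
    thus ?thesis using depth_step[OF rf x(1)] assms(3) by simp
  qed
qed

lemma Tof_acyclic:
  assumes "f \<in> Fset E r"
  shows "\<not> has_cycle (Tof r f)"
proof
  assume "has_cycle (Tof r f)"
  then obtain vs where vs: "length vs \<ge> 3" "distinct vs"
    "\<And>i. i < length vs \<Longrightarrow> {vs ! i, vs ! ((i + 1) mod length vs)} \<in> Tof r f"
    unfolding has_cycle_def by blast
  let ?m = "length vs"
  let ?d = "depth f r"
  have "\<exists>i0<?m. \<forall>j<?m. ?d (vs!j) \<le> ?d (vs!i0)"
  proof -
    have fin: "finite (?d ` set vs)" by simp
    have ne: "?d ` set vs \<noteq> {}" using vs(1) by auto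
    obtain v where v: "v \<in> set vs" "?d v = Max (?d ` set vs)" using Max_in[OF fin ne] by auto
    then obtain i0 where "i0 < ?m" "vs ! i0 = v" by (auto simp: in_set_conv_nth)
    thus ?thesis using v fin by (auto intro!: exI[of _ i0])
  qed
  then obtain i0 where i0: "i0 < ?m" "\<And>j. j < ?m \<Longrightarrow> ?d (vs!j) \<le> ?d (vs!i0)" by blast
  define j1 where "j1 = (i0 + 1) mod ?m"
  define j2 where "j2 = (i0 + ?m - 1) mod ?m"
  have mpos: "?m > 0" using vs(1) by linarith
  have j1: "j1 < ?m" unfolding j1_def using mpos by (rule mod_less_divisor)
  have j2: "j2 < ?m" unfolding j2_def using mpos by (rule mod_less_divisor)
  have j2s: "(j2 + 1) mod ?m = i0"
  proof (cases "i0 = 0")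
    case True
    hence "j2 = ?m - 1" unfolding j2_def using mod_pred[OF i0(1)] by simp
    thus ?thesis using True mpos by simp
  next
    case False
    hence "j2 = i0 - 1" unfolding j2_def using mod_pred[OF i0(1)] by simp
    thus ?thesis using False i0(1) by simp
  qed
  have e1: "{vs ! i0, vs ! j1} \<in> Tof r f" using vs(3)[OF i0(1)] by (simp add: j1_def)
  have e2: "{vs ! i0, vs ! j2} \<in> Tof r f" using vs(3)[OF j2] j2s by (simp add: insert_commute)
  have "vs ! j1 = f (vs ! i0)" using Tof_key[OF assms e1 i0(2)[OF j1]] by simp
  moreover have "vs ! j2 = f (vs ! i0)" using Tof_key[OF assms e2 i0(2)[OF j2]] by simp
  ultimately have "j1 = j2" using vs(2) j1 j2 nth_eq_iff_index_eq by metis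
  moreover have "j1 \<noteq> j2"
  proof -
    have a: "j1 = (if Suc i0 = ?m then 0 else Suc i0)" unfolding j1_def using mod_succ[OF i0(1)] by simp
    have b: "j2 = (if i0 = 0 then ?m - 1 else i0 - 1)" unfolding j2_def by (rule mod_pred[OF i0(1)])
    show ?thesis using a b vs(1) i0(1) by (auto split: if_splits)
  qed
  ultimately show False by simp
qed

lemma Tof_spanning:
  assumes "f \<in> Fset E r"
  shows "spanning_tree E (Tof r f)"
  using Tof_edges[OF assms] Tof_conn[OF assms] Tof_acyclic[OF assms]
  by (simp add: spanning_tree_def)

lemma Tof_inj:
  assumes f: "f \<in> Fset E r" and g: "g \<in> Fset E r" and eq: "Tof r f = Tof r g"
  shows "f = g"
proof (rule ccontr)
  assume "f \<noteq> g"
  then obtain x0 where "f x0 \<noteq> g x0" by auto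
  then obtain x where x: "f x \<noteq> g x" and xmin: "\<And>y. f y \<noteq> g y \<Longrightarrow> depth g r x \<le> depth g r y"
    using ex_has_least_nat[of "\<lambda>y. f y \<noteq> g y" x0 "depth g r"] by blast
  have rg: "reach g r" using g by (simp add: Fset_def)
  have xr: "x \<noteq> r" using x f g by (auto simp: Fset_def)
  have "{x, g x} \<in> Tof r f" using eq xr by (auto simp: Tof_def)
  then obtain y where y: "y \<noteq> r" "{x, g x} = {y, f y}" by (auto simp: Tof_def)
  have "y \<noteq> x" using y x by (metis doubleton_eq_iff)
  hence gy: "y = g x" "f y = x" using y by (auto simp: doubleton_eq_iff)
  have d1: "depth g r (g x) + 1 = depth g r x" by (rule depth_step[OF rg xr])
  have "f (g x) \<noteq> g (g x)"
  proof
    assume "f (g x) = g (g x)"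
    hence "g (g x) = x" using gy by simp
    moreover have "depth g r (g (g x)) + 1 = depth g r (g x)" using depth_step[OF rg] y(1) gy by simp
    ultimately show False using d1 by simp
  qed
  hence "depth g r x \<le> depth g r (g x)" by (rule xmin)
  thus False using d1 by simp
qed


lemma cycle_from_path:
  assumes T: "T' \<subseteq> T" and e: "{a, b} \<in> T" "{a, b} \<notin> T'" and ab: "a \<noteq> b"
    and conn: "(a, b) \<in> {(x, y). {x, y} \<in> T'}\<^sup>*"
  shows "has_cycle T"
proof -
  let ?P = "\<lambda>x y. {x, y} \<in> T'"
  have "?P\<^sup>*\<^sup>* a b" using conn by (simp add: rtranclp_rtrancl_eq[symmetric] )
  then obtain xs where "rtrancl_path ?P a xs b" by (auto simp: rtranclp_eq_rtrancl_path)
  then obtain ys where p: "rtrancl_path ?P a ys b" and d: "distinct (a # ys)"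
    by (rule rtrancl_path_distinct)
  have l2: "length ys \<ge> 2"
  proof (cases ys)
    case Nil thus ?thesis using p ab by (auto elim: rtrancl_path.cases)
  next
    case (Cons c zs)
    show ?thesis
    proof (cases zs)
      case Nil
      hence "?P a c" "c = b" using p Cons by (auto elim: rtrancl_path.cases)
      thus ?thesis using e by simp
    qed (simp add: Cons)
  qed
  let ?vs = "a # ys"
  have "\<forall>i < length ?vs. {?vs ! i, ?vs ! ((i + 1) mod length ?vs)} \<in> T"
  proof (intro allI impI)
    fix i assume i: "i < length ?vs"
    show "{?vs ! i, ?vs ! ((i + 1) mod length ?vs)} \<in> T"
    proof (cases "i < length ys")
      case True
      hence "(i + 1) mod length ?vs = i + 1" by simp
      moreover have "?P (?vs ! i) (ys ! i)" by (rule rtrancl_path_nth[OF p True])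
      ultimately show ?thesis using T by auto
    next
      case False
      hence ii: "i = length ys" using i by simp
      hence "(i + 1) mod length ?vs = 0" by simp
      moreover have "?vs ! i = b"
      proof -
        have ne: "ys \<noteq> []" using l2 by auto
        have "last ys = b" by (rule rtrancl_path_last[OF p ne])
        hence "ys ! (length ys - 1) = b" using ne by (simp add: last_conv_nth)
        thus ?thesis using ii ne by (cases ys) auto
      qed
      ultimately show ?thesis using e by (simp add: insert_commute)
    qed
  qed
  moreover have "length ?vs \<ge> 3" using l2 by simp
  ultimately show ?thesis unfolding has_cycle_def using d by blast
qed

lemma Tof_surj:
  fixes E :: "'n::finite \<Rightarrow> 'n \<Rightarrow> bool"
  assumes E: "simple_graph E" and T: "spanning_tree E T"
  shows "\<exists>f\<in>Fset E r. Tof r f = T"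
proof -
  let ?R = "{(x, y). {x, y} \<in> T}"
  have conn: "(x, r) \<in> ?R\<^sup>*" for x using T by (simp add: spanning_tree_def connected_edges_def)
  define dist where "dist x = (LEAST n. (x, r) \<in> ?R ^^ n)" for x
  have dist: "(x, r) \<in> ?R ^^ dist x" for x
  proof -
    obtain n where "(x, r) \<in> ?R ^^ n" using conn[of x] rtrancl_power by blast
    thus ?thesis unfolding dist_def by (rule LeastI)
  qed
  have step: "\<exists>y. (x, y) \<in> ?R \<and> dist y < dist x" if "x \<noteq> r" for x
  proof -
    have "dist x \<noteq> 0" using dist[of x] that by (metis pair_in_Id_conv relpow.simps(1))
    then obtain k where k: "dist x = Suc k" by (cases "dist x") auto
    then obtain y where y: "(x, y) \<in> ?R" "(y, r) \<in> ?R ^^ k" using dist[of x] by (metis relpow_Suc_D2)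
    have "dist y \<le> k" unfolding dist_def using y(2) by (rule Least_le)
    thus ?thesis using y k by auto
  qed
  define f where "f x = (if x = r then r else SOME y. (x, y) \<in> ?R \<and> dist y < dist x)" for x
  have fx: "(x, f x) \<in> ?R \<and> dist (f x) < dist x" if "x \<noteq> r" for x
    using someI_ex[OF step[OF that]] that by (simp add: f_def)
  have Ef: "E x (f x)" if "x \<noteq> r" for x
  proof -
    have "{x, f x} \<in> edges E" using fx[OF that] T by (auto simp: spanning_tree_def)
    then obtain u v where "{x, f x} = {u, v}" "E u v" by (auto simp: edges_def)
    thus ?thesis using E by (auto simp: doubleton_eq_iff simple_graph_def)
  qed
  have reach: "reach f r" unfolding reach_def
  proof
    fix x show "\<exists>n. (f ^^ n) x = r"
    proof (induction x rule: measure_induct_rule[of dist])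
      case (less x)
      show ?case
      proof (cases "x = r")
        case True thus ?thesis by (auto intro: exI[of _ 0])
      next
        case False
        then obtain n where "(f ^^ n) (f x) = r" using less fx by blast
        hence "(f ^^ Suc n) x = r" by (simp add: funpow_Suc_right del: funpow.simps)
        thus ?thesis by blast
      qed
    qed
  qed
  have fr: "f r = r" by (simp add: f_def)
  have fF: "f \<in> Fset E r" using Ef reach fr by (simp add: Fset_def)
  have sub: "Tof r f \<subseteq> T" using fx by (auto simp: Tof_def)
  have "T \<subseteq> Tof r f"
  proof
    fix e assume eT: "e \<in> T"
    then obtain a b where ab: "e = {a, b}" "E a b" using T by (auto simp: spanning_tree_def edges_def)
    have anb: "a \<noteq> b" using ab E by (auto simp: simple_graph_def)
    show "e \<in> Tof r f"
    proof (rule ccontr)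
      assume "e \<notin> Tof r f"
      have "(a, b) \<in> {(x, y). {x, y} \<in> Tof r f}\<^sup>*"
        using Tof_conn[OF fF] by (simp add: connected_edges_def)
      hence "has_cycle T" using cycle_from_path[OF sub] eT \<open>e \<notin> Tof r f\<close> ab anb by blast
      thus False using T by (simp add: spanning_tree_def)
    qed
  qed
  with sub fF show ?thesis by blast
qed

lemma card_Fset:
  fixes E :: "'n::finite \<Rightarrow> 'n \<Rightarrow> bool"
  assumes E: "simple_graph E"
  shows "card (Fset E r) = num_spanning_trees E"
proof -
  have "bij_betw (Tof r) (Fset E r) {T. spanning_tree E T}"
    unfolding bij_betw_def
  proof
    show "inj_on (Tof r) (Fset E r)" by (rule inj_onI) (rule Tof_inj)
    show "Tof r ` Fset E r = {T. spanning_tree E T}"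
    proof (intro equalityI subsetI)
      fix T assume "T \<in> Tof r ` Fset E r"
      then obtain f where "f \<in> Fset E r" "T = Tof r f" by blast
      thus "T \<in> {T. spanning_tree E T}" using Tof_spanning[of f E r] by simp
    next
      fix T assume "T \<in> {T. spanning_tree E T}"
      then obtain f where "f \<in> Fset E r" "Tof r f = T" using Tof_surj[OF E] by blast
      thus "T \<in> Tof r ` Fset E r" by blast
    qed
  qed
  thus ?thesis unfolding num_spanning_trees_def by (rule bij_betw_same_card)
qed

theorem matrix_tree:
  fixes E :: "'n::finite \<Rightarrow> 'n \<Rightarrow> bool"
  assumes E: "simple_graph E"
  shows "det (lap E + Jm) = real CARD('n) ^ 2 * real (num_spanning_trees E)"
proof -
  fix r :: 'n
  show ?thesis
    using det_lapJ[OF E, of r] det_Mprime[OF E, of r] det_rooted_lap[OF E, of r] card_Fset[OF E, of r]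
    by (simp add: power2_eq_square)
qed


lemma poly_det: "poly (det (M :: real poly^'n::finite^'n)) y = det (\<chi> i j. poly (M$i$j) y)"
  by (simp add: det_def poly_sum poly_prod)

lemma linfac_prod_mset:
  "Polynomial.degree (\<Prod>x\<in>#A. [:- x, 1:] :: real poly) = size A \<and> lead_coeff (\<Prod>x\<in>#A. [:- x, 1:] :: real poly) = 1"
proof (induction A)
  case empty thus ?case by simp
next
  case (add a A)
  have nz: "(\<Prod>x\<in>#A. [:- x, 1:] :: real poly) \<noteq> 0" using add by auto
  let ?Q = "(\<Prod>x\<in>#A. [:- x, 1:] :: real poly)"
  have e: "(\<Prod>x\<in>#add_mset a A. [:- x, 1:] :: real poly) = [:- a, 1:] * ?Q" by simp
  have "Polynomial.degree ([:- a, 1:] * ?Q) = Polynomial.degree [:- a, 1:] + Polynomial.degree ?Q"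
    by (rule degree_mult_eq) (use nz in auto)
  moreover have "lead_coeff ([:- a, 1:] * ?Q) = lead_coeff [:- a, 1:] * lead_coeff ?Q"
    by (rule lead_coeff_mult)
  moreover have dQ: "Polynomial.degree ?Q = size A" using add.IH by (rule conjunct1)
  moreover have lQ: "lead_coeff ?Q = 1" using add.IH by (rule conjunct2)
  ultimately show ?case unfolding e by (simp del: mult_pCons_left)
qed

lemma proots_factor:
  fixes p :: "real poly"
  assumes "p \<noteq> 0"
  shows "\<exists>q. p = (\<Prod>x\<in>#proots p. [:- x, 1:]) * q"
  using assms
proof (induction "Polynomial.degree p" arbitrary: p rule: less_induct)
  case (less p)
  show ?case
  proof (cases "proots p = {#}")
    case True thus ?thesis by (intro exI[of _ p]) simp
  next
    case False
    then obtain a where a: "a \<in># proots p" by fastforce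
    hence "poly p a = 0" using less.prems by simp
    then obtain p' where p': "p = [:- a, 1:] * p'" by (auto simp: poly_eq_0_iff_dvd elim: dvdE)
    have p'0: "p' \<noteq> 0" using p' less.prems by auto
    have "Polynomial.degree ([:- a, 1:] * p') = Polynomial.degree [:- a, 1:] + Polynomial.degree p'"
      by (rule degree_mult_eq) (use p'0 in auto)
    hence "Polynomial.degree p = 1 + Polynomial.degree p'" using p' by (simp del: mult_pCons_left)
    hence "Polynomial.degree p' < Polynomial.degree p" by simp
    then obtain q where q: "p' = (\<Prod>x\<in>#proots p'. [:- x, 1:]) * q" using less.hyps p'0 by blast
    have pr: "proots p = add_mset a (proots p')" using p' p'0
      by (simp add: proots_mult del: mult_pCons_left)
    have "(\<Prod>x\<in>#proots p. [:- x, 1:]) = [:- a, 1:] * (\<Prod>x\<in>#proots p'. [:- x, 1:])"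
      by (simp add: pr del: mult_pCons_left)
    hence "p = (\<Prod>x\<in>#proots p. [:- x, 1:]) * q" using p' q by (simp only: mult.assoc)
    thus ?thesis by blast
  qed
qed

lemma poly_eq_prod_proots:
  fixes p :: "real poly"
  assumes "p \<noteq> 0" "size (proots p) = Polynomial.degree p" "lead_coeff p = 1"
  shows "p = (\<Prod>x\<in>#proots p. [:- x, 1:])"
proof -
  let ?P = "(\<Prod>x\<in>#proots p. [:- x, 1:]) :: real poly"
  obtain q where q: "p = ?P * q" using proots_factor[OF assms(1)] by blast
  have P: "Polynomial.degree ?P = size (proots p)" "lead_coeff ?P = 1" using linfac_prod_mset[of "proots p"] by blast+
  have P0: "?P \<noteq> 0" using P(2) by auto
  have q0: "q \<noteq> 0" using q assms(1) by auto
  have "Polynomial.degree (?P * q) = Polynomial.degree ?P + Polynomial.degree q" by (rule degree_mult_eq[OF P0 q0])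
  hence "Polynomial.degree p = Polynomial.degree ?P + Polynomial.degree q" using q by simp
  hence dq: "Polynomial.degree q = 0" using P assms(2) by simp
  have "lead_coeff (?P * q) = lead_coeff ?P * lead_coeff q" by (rule lead_coeff_mult)
  hence "lead_coeff p = lead_coeff ?P * lead_coeff q" using q by simp
  hence "lead_coeff q = 1" using P assms(3) by simp
  moreover have "q = [:coeff q 0:]" using dq by (metis degree_0_id)
  ultimately have "q = 1" using dq by (simp add: one_pCons)
  thus ?thesis using q by simp
qed

definition cmat :: "real^'n::finite^'n \<Rightarrow> real poly^'n^'n" where
  "cmat A = (\<chi> i j. (if i = j then [:0, 1:] else 0) - [:A $ i $ j:])"

lemma charpoly_cmat: "charpoly A = det (cmat A)"
  by (simp add: charpoly_def cmat_def)

lemma charpoly_degree: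
  fixes A :: "real^'n::finite^'n"
  shows "Polynomial.degree (charpoly A) = CARD('n) \<and> lead_coeff (charpoly A) = 1"
proof -
  let ?C = "cmat A"
  let ?n = "CARD('n)"
  let ?P = "{p. p permutes (UNIV::'n set)}"
  let ?t = "\<lambda>p. of_int (sign p) * (\<Prod>i\<in>UNIV. ?C $ i $ p i)"
  have degC: "Polynomial.degree (?C $ i $ j) \<le> (if i = j then 1 else 0)" for i j
    by (auto simp: cmat_def)
  have tid: "?t id = (\<Prod>i\<in>UNIV. [:- (A$i$i), 1:])"
    by (simp add: cmat_def sign_id)
  have tid_deg: "Polynomial.degree (?t id) = ?n" and tid_lc: "lead_coeff (?t id) = 1"
  proof -
    have "Polynomial.degree (\<Prod>i\<in>UNIV. [:- (A$i$i), 1:]) = (\<Sum>i\<in>(UNIV::'n set). 1)"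
      by (subst degree_prod_eq_sum_degree) auto
    thus "Polynomial.degree (?t id) = ?n" using tid by simp
    show "lead_coeff (?t id) = 1" using tid by (simp add: lead_coeff_prod)
  qed
  have other: "Polynomial.degree (?t p) \<le> ?n - 1" if p: "p \<in> ?P - {id}" for p
  proof -
    from p obtain i0 where i0: "p i0 \<noteq> i0" by (auto simp: fun_eq_iff)
    have "Polynomial.degree (?t p) \<le> Polynomial.degree (of_int (sign p) :: real poly) + Polynomial.degree (\<Prod>i\<in>UNIV. ?C $ i $ p i)"
      by (rule degree_mult_le)
    also have "Polynomial.degree (of_int (sign p) :: real poly) = 0" by (simp add: of_int_poly)
    also have "Polynomial.degree (\<Prod>i\<in>UNIV. ?C $ i $ p i) \<le> (\<Sum>i\<in>UNIV. Polynomial.degree (?C $ i $ p i))"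
      using degree_prod_sum_le[of UNIV "\<lambda>i. ?C $ i $ p i"] by (simp add: o_def)
    also have "\<dots> \<le> (\<Sum>i\<in>UNIV. if i = i0 then 0 else 1)"
    proof (rule sum_mono)
      fix i show "Polynomial.degree (?C $ i $ p i) \<le> (if i = i0 then 0 else 1)"
        using degC[of i "p i"] i0 by (auto split: if_splits)
    qed
    also have "\<dots> = ?n - 1" by (simp add: sum.If_cases Compl_eq_Diff_UNIV card_Diff_singleton)
    finally show ?thesis by simp
  qed
  have "charpoly A = (\<Sum>p\<in>?P. ?t p)" by (simp add: charpoly_cmat det_def)
  also have "\<dots> = ?t id + (\<Sum>p\<in>?P - {id}. ?t p)"
    by (subst sum.remove[of _ id]) (auto simp: permutes_id)
  finally have cp: "charpoly A = ?t id + (\<Sum>p\<in>?P - {id}. ?t p)" .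
  have R: "Polynomial.degree (\<Sum>p\<in>?P - {id}. ?t p) \<le> ?n - 1"
    by (rule degree_sum_le) (use other in auto)
  have npos: "?n > 0" by simp
  have "Polynomial.degree (charpoly A) \<le> ?n"
    using cp R tid_deg degree_add_le_max[of "?t id" "\<Sum>p\<in>?P - {id}. ?t p"] by simp
  moreover have "coeff (charpoly A) ?n = 1"
  proof -
    have "coeff (\<Sum>p\<in>?P - {id}. ?t p) ?n = 0" using R npos by (intro coeff_eq_0) linarith
    thus ?thesis using cp tid_deg tid_lc by simp
  qed
  moreover have "?n \<le> Polynomial.degree (charpoly A)" using calculation(2) by (intro le_degree) simp
  ultimately show ?thesis by simp
qed


definition diagm :: "('n::finite \<Rightarrow> 'a::comm_ring_1) \<Rightarrow> 'a^'n^'n" where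
  "diagm d = (\<chi> i j. if i = j then d i else 0)"

lemma diagm_left: "(diagm d ** M) $ i $ j = d i * M $ i $ j"
proof -
  have "\<And>k. diagm d $ i $ k * M $ k $ j = (if i = k then d i * M $ i $ j else 0)" by (simp add: diagm_def)
  thus ?thesis by (simp add: matrix_matrix_mult_def)
qed

lemma diagm_right: "(M ** diagm d) $ i $ j = M $ i $ j * d j"
proof -
  have "\<And>k. M $ i $ k * diagm d $ k $ j = (if j = k then M $ i $ j * d j else 0)" by (simp add: diagm_def)
  thus ?thesis by (simp add: matrix_matrix_mult_def)
qed

lemma det_diagm: "det (diagm d) = (\<Prod>i\<in>UNIV. d i)"
  by (subst det_diagonal) (auto simp: diagm_def)

lemma det_I_sJ:
  fixes s :: real
  shows "det ((\<chi> i j. (if i = j then 1 else 0) + s) :: real^'n::finite^'n) = 1 + s * real CARD('n)"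
proof -
  let ?A = "(\<chi> i j. (if i = j then 1 else 0) + s) :: real^'n::finite^'n"
  fix r :: 'n
  have S: "(\<Sum>j\<in>UNIV. row j ?A) = (1 + s * real CARD('n)) *s onev"
  proof (rule vec_eq_iff[THEN iffD2], rule allI)
    fix k
    have "(\<Sum>j\<in>UNIV. row j ?A) $ k = (\<Sum>j\<in>UNIV. (if j = k then 1 else 0) + s)"
      by (simp add: sum_component row_def)
    also have "\<dots> = 1 + s * real CARD('n)" by (simp add: sum.distrib)
    finally show "(\<Sum>j\<in>UNIV. row j ?A) $ k = ((1 + s * real CARD('n)) *s onev) $ k"
      by (simp add: onev_def)
  qed
  have "det ?A = (1 + s * real CARD('n)) * det (\<chi> i. if i = r then onev else row i ?A - s *s onev)"
    by (rule det_rowsum[OF S])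
  also have "det (\<chi> i. if i = r then onev else row i ?A - s *s onev) = 1"
    by (subst det_unit_rows[of r]) (auto simp: row_def onev_def)
  finally show ?thesis by simp
qed

lemma det_plus_J:
  fixes K :: "real^'n::finite^'n"
  assumes rs: "\<And>i. (\<Sum>j\<in>UNIV. K $ i $ j) = c" and c: "c \<noteq> 0"
  shows "det (K + Jm) = det K * (1 + real CARD('n) / c)"
proof -
  let ?B = "(\<chi> i j. (if i = j then 1 else 0) + 1 / c) :: real^'n^'n"
  have "K ** ?B = K + Jm"
  proof -
    have "(K ** ?B) $ i $ j = K $ i $ j + 1" for i j
    proof -
      have "(K ** ?B) $ i $ j = (\<Sum>k\<in>UNIV. K $ i $ k * (if k = j then 1 else 0) + K $ i $ k / c)"
        by (simp add: matrix_matrix_mult_def distrib_left)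
      also have "\<dots> = K $ i $ j + (\<Sum>k\<in>UNIV. K $ i $ k) / c"
      proof -
        have "\<And>k. K $ i $ k * (if k = j then 1 else 0) = (if j = k then K $ i $ j else 0)" by simp
        thus ?thesis by (simp add: sum.distrib sum_divide_distrib[symmetric])
      qed
      also have "\<dots> = K $ i $ j + 1" using rs c by simp
      finally show ?thesis .
    qed
    thus ?thesis by (simp add: vec_eq_iff Jm_def)
  qed
  hence "det (K + Jm) = det K * det ?B" by (metis det_mul)
  also have "det ?B = 1 + real CARD('n) / c" using det_I_sJ[of "1 / c", where 'n='n] by simp
  finally show ?thesis .
qed


lemma bip_facts:
  fixes E :: "'a::finite \<Rightarrow> 'a \<Rightarrow> bool"
  assumes "semiregular_bipartite E V1 V2 q1 q2"
  shows "simple_graph E" "V2 = - V1"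
    "\<And>i j. E i j \<Longrightarrow> (i \<in> V1 \<and> j \<notin> V1) \<or> (i \<notin> V1 \<and> j \<in> V1)"
    "\<And>i. i \<in> V1 \<Longrightarrow> degree E i = q1" "\<And>i. i \<notin> V1 \<Longrightarrow> degree E i = q2"
    "card V1 + card V2 = CARD('a)"
proof -
  note a = assms[unfolded semiregular_bipartite_def]
  show "simple_graph E" using a by blast
  show V2: "V2 = - V1" using a by blast
  show "\<And>i j. E i j \<Longrightarrow> (i \<in> V1 \<and> j \<notin> V1) \<or> (i \<notin> V1 \<and> j \<in> V1)" using a V2 by blast
  show "\<And>i. i \<in> V1 \<Longrightarrow> degree E i = q1" using a by blast
  show "\<And>i. i \<notin> V1 \<Longrightarrow> degree E i = q2" using a V2 by blast
  have "card (V1 \<union> V2) = card V1 + card V2" using a by (intro card_Un_disjoint) auto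
  thus "card V1 + card V2 = CARD('a)" using a by simp
qed

definition Xp :: "real poly" where "Xp = [:0, 1:]"

definition Gm :: "('a::finite \<Rightarrow> 'a \<Rightarrow> bool) \<Rightarrow> 'a set \<Rightarrow> real poly^'a^'a" where
  "Gm E V1 = (\<chi> i j. (if i = j then (if i \<in> V1 then Xp * Xp else 1) else 0) - [:adjacency E $ i $ j:])"

lemma det_scalar_rows:
  fixes C :: "'b::comm_ring_1^'n::finite^'n"
  shows "det (\<chi> i j. x * C $ i $ j) = x ^ CARD('n) * det C"
proof -
  have "(\<chi> i j. x * C $ i $ j) = (\<chi> i. x *s C $ i)" by (simp add: vec_eq_iff)
  hence "det (\<chi> i j. x * C $ i $ j) = (\<Prod>i\<in>(UNIV::'n set). x) * det (\<chi> i. C $ i)"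
    by (simp add: det_rows_mul)
  thus ?thesis by simp
qed

lemma P1:
  fixes E :: "'a::finite \<Rightarrow> 'a \<Rightarrow> bool"
  assumes bip: "semiregular_bipartite E V1 V2 q1 q2"
  shows "Xp ^ card V2 * det (Gm E V1) * Xp ^ card V2 = Xp ^ CARD('a) * charpoly (adjacency E)"
proof -
  note bf = bip_facts[OF bip]
  let ?d = "\<lambda>i. if i \<in> V1 then 1 else Xp"
  have eq: "diagm ?d ** Gm E V1 ** diagm ?d = (\<chi> i j. Xp * cmat (adjacency E) $ i $ j)"
  proof -
    have "(diagm ?d ** Gm E V1 ** diagm ?d) $ i $ j = Xp * cmat (adjacency E) $ i $ j" for i j
    proof -
      have "(diagm ?d ** Gm E V1 ** diagm ?d) $ i $ j = ?d i * Gm E V1 $ i $ j * ?d j"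
        by (simp add: diagm_left diagm_right)
      also have "\<dots> = Xp * cmat (adjacency E) $ i $ j"
      proof (cases "i = j")
        case True
        have "\<not> E i i" using bf(1) by (simp add: simple_graph_def)
        thus ?thesis using True by (auto simp: Gm_def cmat_def adjacency_def Xp_def)
      next
        case False
        show ?thesis
        proof (cases "E i j")
          case True
          thus ?thesis using False bf(3)[OF True] by (auto simp: Gm_def cmat_def adjacency_def)
        qed (use False in \<open>auto simp: Gm_def cmat_def adjacency_def\<close>)
      qed
      finally show ?thesis .
    qed
    thus ?thesis by (simp add: vec_eq_iff)
  qed
  have dd: "det (diagm ?d) = Xp ^ card V2"
  proof -
    have "det (diagm ?d) = (\<Prod>i\<in>UNIV. ?d i)" by (rule det_diagm)
    also have "\<dots> = (\<Prod>i\<in>-V1. Xp)" by (simp add: prod.If_cases Compl_eq_Diff_UNIV)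
    also have "\<dots> = Xp ^ card V2" using bf(2) by simp
    finally show ?thesis .
  qed
  have "det (diagm ?d ** Gm E V1 ** diagm ?d) = Xp ^ card V2 * det (Gm E V1) * Xp ^ card V2"
    by (simp add: det_mul dd)
  also have "det (diagm ?d ** Gm E V1 ** diagm ?d) = Xp ^ CARD('a) * charpoly (adjacency E)"
    unfolding eq det_scalar_rows charpoly_cmat ..
  finally show ?thesis by simp
qed


lemma prod_mset_sum_set:
  assumes "finite I"
  shows "prod_mset (image_mset f (\<Sum>i\<in>I. M i)) = (\<Prod>i\<in>I. prod_mset (image_mset f (M i)))"
  using assms by (induction I rule: finite_induct) auto

lemma size_sum_set:
  assumes "finite I"
  shows "size (\<Sum>i\<in>I. (M i :: 'b multiset)) = (\<Sum>i\<in>I. size (M i))"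
  using assms by (induction I rule: finite_induct) auto

lemma charpoly_spec:
  fixes E :: "'a::finite \<Rightarrow> 'a \<Rightarrow> bool"
  assumes sp: "spec E = (\<Sum>i\<in>{1..k}. {#lam i, - lam i#}) + replicate_mset (CARD('a) - 2 * k) 0"
  shows "charpoly (adjacency E) = (\<Prod>i\<in>{1..k}. [:- lam i, 1:] * [:lam i, 1:]) * Xp ^ (CARD('a) - 2 * k)
         \<and> 2 * k \<le> CARD('a)"
proof -
  let ?p = "charpoly (adjacency E)"
  have dl: "Polynomial.degree ?p = CARD('a)" "lead_coeff ?p = 1" using charpoly_degree by blast+
  have p0: "?p \<noteq> 0" using dl(2) by auto
  have sz: "size (spec E) = 2 * k + (CARD('a) - 2 * k)"
    unfolding sp by (simp add: size_sum_set)
  have "size (spec E) \<le> CARD('a)" using size_proots_le[of ?p] dl(1) by (simp add: spec_def)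
  hence k: "2 * k \<le> CARD('a)" using sz by linarith
  hence "size (proots ?p) = Polynomial.degree ?p" using sz dl(1) by (simp add: spec_def)
  hence "?p = (\<Prod>x\<in>#proots ?p. [:- x, 1:])" using poly_eq_prod_proots[OF p0 _ dl(2)] by simp
  also have "proots ?p = spec E" by (simp add: spec_def)
  also have "(\<Prod>x\<in>#spec E. [:- x, 1:]) = (\<Prod>i\<in>{1..k}. [:- lam i, 1:] * [:lam i, 1:]) * Xp ^ (CARD('a) - 2 * k)"
    unfolding sp by (simp add: prod_mset_sum_set Xp_def del: mult_pCons_left)
  finally show ?thesis using k by simp
qed


lemma Xp_nz[simp]: "Xp \<noteq> 0" by (simp add: Xp_def)
lemma Xp_pow_nz: "Xp ^ n \<noteq> 0" by (simp add: Xp_def)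

lemma G_form:
  fixes E :: "'a::finite \<Rightarrow> 'a \<Rightarrow> bool"
  assumes bip: "semiregular_bipartite E V1 V2 q1 q2"
    and sp: "spec E = (\<Sum>i\<in>{1..k}. {#lam i, - lam i#}) + replicate_mset (CARD('a) - 2 * k) 0"
    and n12: "card V1 \<le> card V2"
    and pos: "\<forall>i\<in>{1..k}. lam i > 0"
  shows "k \<le> card V1 \<and> det (Gm E V1) = Xp ^ (2 * (card V1 - k)) * (\<Prod>i\<in>{1..k}. [:- lam i, 1:] * [:lam i, 1:])"
proof -
  note bf = bip_facts[OF bip]
  let ?Q = "(\<Prod>i\<in>{1..k}. [:- lam i, 1:] * [:lam i, 1:])"
  let ?G = "det (Gm E V1)"
  define n1 where "n1 = card V1"
  define d where "d = card V2 - card V1"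
  define e where "e = CARD('a) - 2 * k"
  have n2: "card V2 = n1 + d" using n12 by (simp add: n1_def d_def)
  have cs: "charpoly (adjacency E) = ?Q * Xp ^ e" and k2: "2 * k \<le> CARD('a)"
    using charpoly_spec[OF sp] by (auto simp: e_def)
  have card: "CARD('a) = n1 + (n1 + d)" using bf(6) n2 by (simp add: n1_def)
  have "Xp ^ card V2 * ?G * Xp ^ card V2 = Xp ^ CARD('a) * charpoly (adjacency E)" by (rule P1[OF bip])
  hence "Xp ^ (n1 + d) * (Xp ^ n1 * (?G * Xp ^ d)) = Xp ^ (n1 + d) * (Xp ^ n1 * (Xp ^ e * ?Q))"
    unfolding n2 card cs by (simp add: power_add algebra_simps)
  hence eq: "?G * Xp ^ d = Xp ^ e * ?Q" by (simp add: Xp_pow_nz)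
  have Q0: "poly ?Q 0 \<noteq> 0" using pos by (force simp: poly_prod)
  have de: "d \<le> e"
  proof (rule ccontr)
    assume "\<not> d \<le> e"
    then obtain s where s: "d = e + Suc s" by (metis add_Suc_right less_imp_Suc_add not_le)
    have "Xp ^ e * (?G * Xp ^ Suc s) = Xp ^ e * ?Q" using eq unfolding s by (simp add: power_add algebra_simps)
    hence "?G * Xp ^ Suc s = ?Q" by (simp add: Xp_pow_nz)
    hence "poly ?Q 0 = 0" by (metis poly_mult mult_zero_right poly_power power_Suc poly_pCons Xp_def mult_zero_left add_0 poly_0)
    thus False using Q0 by simp
  qed
  have kn: "k \<le> n1" using de k2 card unfolding e_def by linarith
  have e2: "e = d + 2 * (n1 - k)" using kn card unfolding e_def by simp
  have "Xp ^ d * ?G = Xp ^ d * (Xp ^ (2 * (n1 - k)) * ?Q)" using eq unfolding e2 by (simp add: power_add algebra_simps)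
  hence "?G = Xp ^ (2 * (n1 - k)) * ?Q" by (simp add: Xp_pow_nz)
  thus ?thesis using kn by (simp add: n1_def)
qed


definition Wd :: "('a::finite \<Rightarrow> 'a \<Rightarrow> bool) \<Rightarrow> 'a set \<Rightarrow> real \<Rightarrow> real \<Rightarrow> real" where
  "Wd E V1 \<alpha> \<beta> = det (\<chi> i j. (if i = j then (if i \<in> V1 then \<alpha> else \<beta>) else 0) - adjacency E $ i $ j)"

lemma P4:
  fixes E :: "'a::finite \<Rightarrow> 'a \<Rightarrow> bool"
  assumes bip: "semiregular_bipartite E V1 V2 q1 q2"
    and sp: "spec E = (\<Sum>i\<in>{1..k}. {#lam i, - lam i#}) + replicate_mset (CARD('a) - 2 * k) 0"
    and n12: "card V1 \<le> card V2"
    and pos: "\<forall>i\<in>{1..k}. lam i > 0"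
    and w: "w \<ge> 0"
  shows "k \<le> card V1 \<and> Wd E V1 w 1 = w ^ (card V1 - k) * (\<Prod>i\<in>{1..k}. w - (lam i)\<^sup>2)"
proof -
  define y where "y = sqrt w"
  have yy: "y * y = w" using w by (simp add: y_def)
  note G = G_form[OF bip sp n12 pos]
  have "poly (det (Gm E V1)) y = det (\<chi> i j. poly (Gm E V1 $ i $ j) y)" by (rule poly_det)
  also have "(\<chi> i j. poly (Gm E V1 $ i $ j) y) = (\<chi> i j. (if i = j then (if i \<in> V1 then w else 1) else 0) - adjacency E $ i $ j)"
    by (simp add: vec_eq_iff Gm_def Xp_def yy[symmetric])
  finally have "Wd E V1 w 1 = poly (det (Gm E V1)) y" by (simp add: Wd_def)
  also have "\<dots> = (y * y) ^ (card V1 - k) * (\<Prod>i\<in>{1..k}. y\<^sup>2 - (lam i)\<^sup>2)"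
    using G by (simp add: poly_prod Xp_def power_mult power2_eq_square[symmetric] del: mult_pCons_left)
  also have "\<dots> = w ^ (card V1 - k) * (\<Prod>i\<in>{1..k}. w - (lam i)\<^sup>2)"
    by (simp add: yy[symmetric] power2_eq_square algebra_simps)
  finally show ?thesis using G by simp
qed


lemma P5:
  fixes E :: "'a::finite \<Rightarrow> 'a \<Rightarrow> bool"
  assumes bip: "semiregular_bipartite E V1 V2 q1 q2"
    and sp: "spec E = (\<Sum>i\<in>{1..k}. {#lam i, - lam i#}) + replicate_mset (CARD('a) - 2 * k) 0"
    and n12: "card V1 \<le> card V2"
    and pos: "\<forall>i\<in>{1..k}. lam i > 0"
    and \<alpha>: "\<alpha> > 0" and \<beta>: "\<beta> > 0"
  shows "Wd E V1 \<alpha> \<beta> = \<alpha> ^ (card V1 - k) * \<beta> ^ (card V2 - k) * (\<Prod>i\<in>{1..k}. \<alpha> * \<beta> - (lam i)\<^sup>2)"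
proof -
  note bf = bip_facts[OF bip]
  let ?M = "(\<chi> i j. (if i = j then (if i \<in> V1 then \<alpha> else \<beta>) else 0) - adjacency E $ i $ j) :: real^'a^'a"
  let ?M' = "(\<chi> i j. (if i = j then (if i \<in> V1 then \<alpha> * \<beta> else 1) else 0) - adjacency E $ i $ j) :: real^'a^'a"
  let ?d1 = "\<lambda>i. if i \<in> V1 then \<beta> else 1"
  let ?d2 = "\<lambda>i. if i \<in> V1 then 1 else 1 / \<beta>"
  have eq: "diagm ?d1 ** ?M ** diagm ?d2 = ?M'"
  proof -
    have "(diagm ?d1 ** ?M ** diagm ?d2) $ i $ j = ?M' $ i $ j" for i j
    proof -
      have "(diagm ?d1 ** ?M ** diagm ?d2) $ i $ j = ?d1 i * ?M $ i $ j * ?d2 j"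
        by (simp add: diagm_left diagm_right)
      also have "\<dots> = ?M' $ i $ j"
      proof (cases "i = j")
        case True
        have "\<not> E i i" using bf(1) by (simp add: simple_graph_def)
        thus ?thesis using True \<beta> by (auto simp: adjacency_def)
      next
        case False
        show ?thesis
        proof (cases "E i j")
          case True
          thus ?thesis using False bf(3)[OF True] \<beta> by (auto simp: adjacency_def)
        qed (use False in \<open>auto simp: adjacency_def\<close>)
      qed
      finally show ?thesis .
    qed
    thus ?thesis by (simp add: vec_eq_iff)
  qed
  have d1: "det (diagm ?d1) = \<beta> ^ card V1"
    by (simp add: det_diagm prod.If_cases Int_def)
  have d2: "det (diagm ?d2) = (1 / \<beta>) ^ card V2"
  proof -
    have "{x. x \<notin> V1} = V2" using bf(2) by auto
    thus ?thesis by (simp add: det_diagm prod.If_cases Int_def)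
  qed
  obtain m where m: "card V1 = k + m" using P4[OF bip sp n12 pos, of 0] by (auto dest: le_Suc_ex)
  obtain d where d: "card V2 = card V1 + d" using n12 by (auto dest: le_Suc_ex)
  have ab: "\<alpha> * \<beta> \<ge> 0" using \<alpha> \<beta> by simp
  have "\<beta> ^ card V1 * Wd E V1 \<alpha> \<beta> * (1 / \<beta>) ^ card V2 = Wd E V1 (\<alpha> * \<beta>) 1"
    unfolding Wd_def eq[symmetric] by (simp add: det_mul d1 d2)
  also have "\<dots> = (\<alpha> * \<beta>) ^ m * (\<Prod>i\<in>{1..k}. \<alpha> * \<beta> - (lam i)\<^sup>2)"
    using P4[OF bip sp n12 pos ab] m by simp
  finally have "\<beta> ^ card V1 * Wd E V1 \<alpha> \<beta> * (1 / \<beta>) ^ card V2 = (\<alpha> * \<beta>) ^ m * (\<Prod>i\<in>{1..k}. \<alpha> * \<beta> - (lam i)\<^sup>2)" .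
  hence "Wd E V1 \<alpha> \<beta> * (1 / \<beta>) ^ d = (\<alpha> * \<beta>) ^ m * (\<Prod>i\<in>{1..k}. \<alpha> * \<beta> - (lam i)\<^sup>2)"
    using \<beta> unfolding d by (simp add: power_add field_simps)
  hence "Wd E V1 \<alpha> \<beta> = \<beta> ^ d * ((\<alpha> * \<beta>) ^ m * (\<Prod>i\<in>{1..k}. \<alpha> * \<beta> - (lam i)\<^sup>2))"
    using \<beta> by (simp add: field_simps)
  also have "\<dots> = \<alpha> ^ (card V1 - k) * \<beta> ^ (card V2 - k) * (\<Prod>i\<in>{1..k}. \<alpha> * \<beta> - (lam i)\<^sup>2)"
    using m d by (simp add: power_add power_mult_distrib algebra_simps)
  finally show ?thesis .
qed

lemma partB:
  fixes E :: "'a::finite \<Rightarrow> 'a \<Rightarrow> bool"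
  assumes bip: "semiregular_bipartite E V1 V2 q1 q2"
    and sp: "spec E = (\<Sum>i\<in>{1..k}. {#lam i, - lam i#}) + replicate_mset (CARD('a) - 2 * k) 0"
    and n12: "card V1 \<le> card V2"
    and pos: "\<forall>i\<in>{1..k}. lam i > 0"
    and k1: "k \<ge> 1" and l1: "lam 1 = sqrt (real (q1 * q2))"
    and c: "c > 0"
  shows "det ((\<chi> a b. (if a = b then real (degree E a) + c else 0) - (if E a b then 1 else 0)) + Jm) =
    (real CARD('a) + c) * (real q1 + real q2 + c) * (real q1 + c) ^ (card V1 - k) * (real q2 + c) ^ (card V2 - k)
    * (\<Prod>i\<in>{2..k}. (real q1 + c) * (real q2 + c) - (lam i)\<^sup>2)"
proof -
  note bf = bip_facts[OF bip]
  let ?K = "(\<chi> a b. (if a = b then real (degree E a) + c else 0) - (if E a b then 1 else 0)) :: real^'a^'a"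
  have rs: "(\<Sum>j\<in>UNIV. ?K $ i $ j) = c" for i
  proof -
    have "(\<Sum>j\<in>UNIV. ?K $ i $ j) = (\<Sum>j\<in>UNIV. (if i = j then real (degree E i) + c else 0)) - (\<Sum>j\<in>UNIV. (if E i j then 1 else 0))"
      by (simp add: sum_subtractf)
    also have "\<dots> = real (degree E i) + c - real (card {j. E i j})"
      by (simp add: sum.If_cases)
    finally show ?thesis by (simp add: degree_def)
  qed
  have "det (?K + Jm) = det ?K * (1 + real CARD('a) / c)"
    by (rule det_plus_J[OF rs]) (use c in auto)
  also have "det ?K = Wd E V1 (real q1 + c) (real q2 + c)"
  proof -
    have "?K = (\<chi> i j. (if i = j then (if i \<in> V1 then real q1 + c else real q2 + c) else 0) - adjacency E $ i $ j)"
      using bf(4,5) by (auto simp: vec_eq_iff adjacency_def)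
    thus ?thesis by (simp add: Wd_def)
  qed
  also have "\<dots> = (real q1 + c) ^ (card V1 - k) * (real q2 + c) ^ (card V2 - k) *
      (\<Prod>i\<in>{1..k}. (real q1 + c) * (real q2 + c) - (lam i)\<^sup>2)"
    by (rule P5[OF bip sp n12 pos]) (use c in auto)
  also have "(\<Prod>i\<in>{1..k}. (real q1 + c) * (real q2 + c) - (lam i)\<^sup>2) =
      ((real q1 + c) * (real q2 + c) - (lam 1)\<^sup>2) * (\<Prod>i\<in>{2..k}. (real q1 + c) * (real q2 + c) - (lam i)\<^sup>2)"
    using k1 by (simp add: prod.atLeast_Suc_atMost numeral_2_eq_2)
  also have "(lam 1)\<^sup>2 = real q1 * real q2" using l1 by simp
  finally have main: "det (?K + Jm) = (real q1 + c) ^ (card V1 - k) * (real q2 + c) ^ (card V2 - k) *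
      (((real q1 + c) * (real q2 + c) - real q1 * real q2) * (\<Prod>i\<in>{2..k}. (real q1 + c) * (real q2 + c) - (lam i)\<^sup>2))
      * (1 + real CARD('a) / c)" .
  have id: "((real q1 + c) * (real q2 + c) - real q1 * real q2) * (1 + real CARD('a) / c) =
      (real CARD('a) + c) * (real q1 + real q2 + c)"
    using c by (simp add: field_simps)
  have ac: "\<And>a b u p v :: real. a * b * (u * p) * v = (u * v) * a * b * p" by (simp add: mult_ac)
  show ?thesis unfolding main ac id ..
qed


lemma card_sum_type: "CARD('a::finite + 'b::finite) = CARD('a) + CARD('b)"
  by (metis UNIV_Plus_UNIV card_Plus finite)

lemma swapidseq_map_sum_left: "swapidseq n p \<Longrightarrow> swapidseq n (map_sum p id)"
proof (induction rule: swapidseq.induct)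
  case id
  have "map_sum (\<lambda>a. a) (\<lambda>a. a) = (\<lambda>a::'a + 'b. a)"
  proof (rule ext)
    fix x :: "'a + 'b" show "map_sum (\<lambda>a. a) (\<lambda>a. a) x = x" by (cases x) simp_all
  qed
  thus ?case using swapidseq.id[where 'a="'a + 'b"] by (simp add: id_def)
next
  case (comp_Suc n p a b)
  have eq: "map_sum (Transposition.transpose a b \<circ> p) id = Transposition.transpose (Inl a) (Inl b) \<circ> map_sum p (id :: 'b \<Rightarrow> 'b)" (is "?l = ?r")
  proof (rule ext)
    fix x :: "'a + 'b" show "?l x = ?r x" by (cases x) (auto simp: Transposition.transpose_def)
  qed
  have "swapidseq (Suc n) (Transposition.transpose (Inl a) (Inl b) \<circ> map_sum p (id :: 'b \<Rightarrow> 'b))"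
    using comp_Suc.IH comp_Suc.hyps(2) by (intro swapidseq.comp_Suc) (auto simp: id_def)
  thus ?case by (simp only: eq)
qed

lemma swapidseq_map_sum_right: "swapidseq n p \<Longrightarrow> swapidseq n (map_sum id p)"
proof (induction rule: swapidseq.induct)
  case id
  have "map_sum (\<lambda>a. a) (\<lambda>a. a) = (\<lambda>a::'b + 'a. a)"
  proof (rule ext)
    fix x :: "'b + 'a" show "map_sum (\<lambda>a. a) (\<lambda>a. a) x = x" by (cases x) simp_all
  qed
  thus ?case using swapidseq.id[where 'a="'b + 'a"] by (simp add: id_def)
next
  case (comp_Suc n p a b)
  have eq: "map_sum id (Transposition.transpose a b \<circ> p) = Transposition.transpose (Inr a) (Inr b) \<circ> map_sum (id :: 'b \<Rightarrow> 'b) p" (is "?l = ?r")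
  proof (rule ext)
    fix x :: "'b + 'a" show "?l x = ?r x" by (cases x) (auto simp: Transposition.transpose_def)
  qed
  have "swapidseq (Suc n) (Transposition.transpose (Inr a) (Inr b) \<circ> map_sum (id :: 'b \<Rightarrow> 'b) p)"
    using comp_Suc.IH comp_Suc.hyps(2) by (intro swapidseq.comp_Suc) (auto simp: id_def)
  thus ?case by (simp only: eq)
qed

lemma sign_map_sum:
  fixes p :: "'a \<Rightarrow> 'a" and q :: "'b \<Rightarrow> 'b"
  assumes "permutation p" "permutation q"
  shows "sign (map_sum p q) = sign p * sign q"
proof -
  obtain n where n: "swapidseq n p" using assms(1) by (auto simp: permutation_def)
  obtain m where m: "swapidseq m q" using assms(2) by (auto simp: permutation_def)
  have e1: "evenperm p = even n" by (rule evenperm_unique[OF n refl])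
  have e2: "evenperm (map_sum p (id::'b \<Rightarrow> 'b)) = even n"
    by (rule evenperm_unique[OF swapidseq_map_sum_left[OF n] refl])
  have s1: "sign (map_sum p (id::'b \<Rightarrow> 'b)) = sign p"
    unfolding sign_def e1 e2 ..
  have e3: "evenperm q = even m" by (rule evenperm_unique[OF m refl])
  have e4: "evenperm (map_sum (id::'a \<Rightarrow> 'a) q) = even m"
    by (rule evenperm_unique[OF swapidseq_map_sum_right[OF m] refl])
  have s2: "sign (map_sum (id::'a \<Rightarrow> 'a) q) = sign q"
    unfolding sign_def e3 e4 ..
  have eq: "map_sum p q = map_sum p (id::'b \<Rightarrow> 'b) \<circ> map_sum (id::'a \<Rightarrow> 'a) q" by (simp add: map_sum.comp)
  have "sign (map_sum p q) = sign (map_sum p (id::'b \<Rightarrow> 'b)) * sign (map_sum (id::'a \<Rightarrow> 'a) q)"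
    unfolding eq
    using swapidseq_map_sum_left[OF n] swapidseq_map_sum_right[OF m]
    by (intro sign_compose) (auto simp: permutation_def)
  thus ?thesis using s1 s2 by simp
qed


definition blockm :: "real^'a::finite^'a \<Rightarrow> real^'b::finite^'b \<Rightarrow> real^('a + 'b)^('a + 'b)" where
  "blockm X Y = (\<chi> i j. (case (i, j) of (Inl a, Inl b) \<Rightarrow> X$a$b | (Inr a, Inr b) \<Rightarrow> Y$a$b | _ \<Rightarrow> 0))"

lemma permutes_UNIV_iff_bij: "p permutes UNIV \<longleftrightarrow> bij p"
  using bij_imp_permutes[of p UNIV] permutes_imp_bij[of p UNIV] by auto

lemma det_blockm:
  fixes X :: "real^'a::finite^'a" and Y :: "real^'b::finite^'b"
  shows "det (blockm X Y) = det X * det Y"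
proof -
  let ?B = "blockm X Y"
  let ?P = "{p. p permutes (UNIV :: ('a + 'b) set)}"
  let ?P1 = "{p. p permutes (UNIV :: 'a set)}"
  let ?P2 = "{p. p permutes (UNIV :: 'b set)}"
  let ?t = "\<lambda>p. of_int (sign p) * (\<Prod>i\<in>UNIV. ?B $ i $ p i) :: real"
  let ?h = "\<lambda>(p1, p2). map_sum p1 p2 :: 'a + 'b \<Rightarrow> 'a + 'b"
  let ?S = "?h ` (?P1 \<times> ?P2)"
  have SP: "?S \<subseteq> ?P"
  proof
    fix p assume "p \<in> ?S"
    then obtain p1 p2 where p: "p = map_sum p1 p2" "bij p1" "bij p2"
      by (auto simp: permutes_UNIV_iff_bij)
    have "bij (map_sum p1 p2)"
    proof (rule bij_betw_byWitness[where f'="map_sum (inv p1) (inv p2)"])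
      show "\<forall>x\<in>UNIV. map_sum (inv p1) (inv p2) (map_sum p1 p2 x) = x"
      proof
        fix x :: "'a + 'b" show "map_sum (inv p1) (inv p2) (map_sum p1 p2 x) = x"
          using p by (cases x) (simp_all add: bij_is_inj)
      qed
      show "\<forall>x\<in>UNIV. map_sum p1 p2 (map_sum (inv p1) (inv p2) x) = x"
      proof
        fix x :: "'a + 'b" show "map_sum p1 p2 (map_sum (inv p1) (inv p2) x) = x"
          using p by (cases x) (simp_all add: bij_is_surj surj_f_inv_f)
      qed
    qed auto
    thus "p \<in> ?P" using p by (simp add: permutes_UNIV_iff_bij)
  qed
  have zero: "?t p = 0" if pP: "p \<in> ?P - ?S" for p
  proof (rule ccontr)
    assume "?t p \<noteq> 0"
    hence nz: "\<And>i. ?B $ i $ p i \<noteq> 0" by auto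
    have l: "\<exists>a'. p (Inl a) = Inl a'" for a
      using nz[of "Inl a"] by (cases "p (Inl a)") (auto simp: blockm_def)
    have r: "\<exists>b'. p (Inr b) = Inr b'" for b
      using nz[of "Inr b"] by (cases "p (Inr b)") (auto simp: blockm_def)
    define p1 where "p1 a = projl (p (Inl a))" for a
    define p2 where "p2 b = projr (p (Inr b))" for b
    have p1: "p (Inl a) = Inl (p1 a)" for a using l[of a] by (auto simp: p1_def)
    have p2: "p (Inr b) = Inr (p2 b)" for b using r[of b] by (auto simp: p2_def)
    have peq: "p = map_sum p1 p2"
    proof (rule ext)
      fix x show "p x = map_sum p1 p2 x" by (cases x) (simp_all add: p1 p2)
    qed
    have injp: "inj p" using pP by (simp add: permutes_UNIV_iff_bij bij_is_inj)
    have "inj p1" using injp p1 by (metis injD injI sum.inject(1))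
    hence b1: "bij p1" using finite_UNIV_inj_surj[of p1] by (simp add: bij_def)
    have "inj p2" using injp p2 by (metis injD injI sum.inject(2))
    hence b2: "bij p2" using finite_UNIV_inj_surj[of p2] by (simp add: bij_def)
    have "p \<in> ?S" using peq b1 b2 by (auto simp: permutes_UNIV_iff_bij)
    thus False using pP by simp
  qed
  have "det ?B = (\<Sum>p\<in>?P. ?t p)" by (simp add: det_def)
  also have "\<dots> = (\<Sum>p\<in>?S. ?t p)"
    using SP zero by (intro sum.mono_neutral_right) auto
  also have "\<dots> = (\<Sum>pp\<in>?P1 \<times> ?P2. ?t (?h pp))"
  proof (rule sum.reindex[unfolded o_def])
    show "inj_on ?h (?P1 \<times> ?P2)"
    proof (rule inj_onI, clarsimp)
      fix p1 p2 q1 q2 assume "map_sum p1 p2 = (map_sum q1 q2 :: 'a + 'b \<Rightarrow> _)"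
      hence a: "\<And>x. map_sum p1 p2 (Inl x) = map_sum q1 q2 (Inl x)"
        and b: "\<And>x. map_sum p1 p2 (Inr x) = map_sum q1 q2 (Inr x)" by auto
      show "p1 = q1 \<and> p2 = q2" using a b by (auto simp: fun_eq_iff)
    qed
  qed
  also have "\<dots> = (\<Sum>(p1, p2)\<in>?P1 \<times> ?P2. (of_int (sign p1) * (\<Prod>a\<in>UNIV. X $ a $ p1 a)) *
                                          (of_int (sign p2) * (\<Prod>b\<in>UNIV. Y $ b $ p2 b)))"
  proof (rule sum.cong[OF refl], clarsimp)
    fix p1 p2 assume h: "p1 permutes (UNIV :: 'a set)" "p2 permutes (UNIV :: 'b set)"
    have s: "sign (map_sum p1 p2) = sign p1 * sign p2"
      using h by (intro sign_map_sum) (auto simp: permutation_permutes)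
    have "(\<Prod>i\<in>UNIV. ?B $ i $ map_sum p1 p2 i) = (\<Prod>i\<in>(UNIV::'a set) <+> (UNIV::'b set). ?B $ i $ map_sum p1 p2 i)"
      by (simp add: UNIV_Plus_UNIV)
    also have "\<dots> = (\<Prod>a\<in>UNIV. X $ a $ p1 a) * (\<Prod>b\<in>UNIV. Y $ b $ p2 b)"
      by (subst prod.Plus) (auto simp: blockm_def)
    finally show "real_of_int (sign (map_sum p1 p2)) * (\<Prod>i\<in>UNIV. ?B $ i $ map_sum p1 p2 i) =
        real_of_int (sign p1) * (\<Prod>a\<in>UNIV. X $ a $ p1 a) * (real_of_int (sign p2) * (\<Prod>b\<in>UNIV. Y $ b $ p2 b))"
      using s by simp
  qed
  also have "\<dots> = (\<Sum>p1\<in>?P1. of_int (sign p1) * (\<Prod>a\<in>UNIV. X $ a $ p1 a)) *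
                  (\<Sum>p2\<in>?P2. of_int (sign p2) * (\<Prod>b\<in>UNIV. Y $ b $ p2 b))"
    by (simp add: sum_product sum.cartesian_product)
  also have "\<dots> = det X * det Y" by (simp add: det_def)
  finally show ?thesis .
qed



lemma join_simple:
  assumes "simple_graph E1" "simple_graph E2"
  shows "simple_graph (join E1 E2)"
  using assms unfolding simple_graph_def join_def by (auto split: sum.splits)

lemma degree_join_Inl:
  fixes E1 :: "'a::finite \<Rightarrow> 'a \<Rightarrow> bool" and E2 :: "'b::finite \<Rightarrow> 'b \<Rightarrow> bool"
  shows "degree (join E1 E2) (Inl a) = degree E1 a + CARD('b)"
proof -
  have seq: "{u. join E1 E2 (Inl a) u} = Inl ` {b. E1 a b} \<union> range Inr"
  proof (rule set_eqI)
    fix u :: "'a + 'b" show "u \<in> {u. join E1 E2 (Inl a) u} \<longleftrightarrow> u \<in> Inl ` {b. E1 a b} \<union> range Inr"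
      by (cases u) (auto simp: join_def)
  qed
  have "card (Inl ` {b. E1 a b} \<union> range (Inr :: 'b \<Rightarrow> 'a + 'b)) = card ((Inl :: 'a \<Rightarrow> 'a + 'b) ` {b. E1 a b}) + card (range (Inr :: 'b \<Rightarrow> 'a + 'b))"
    by (rule card_Un_disjoint) auto
  hence "card {u. join E1 E2 (Inl a) u} = card ((Inl :: 'a \<Rightarrow> 'a + 'b) ` {b. E1 a b}) + card (range (Inr :: 'b \<Rightarrow> 'a + 'b))"
    using seq by simp
  thus ?thesis by (simp add: degree_def card_image)
qed

lemma degree_join_Inr:
  fixes E1 :: "'a::finite \<Rightarrow> 'a \<Rightarrow> bool" and E2 :: "'b::finite \<Rightarrow> 'b \<Rightarrow> bool"
  shows "degree (join E1 E2) (Inr b) = degree E2 b + CARD('a)"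
proof -
  have seq: "{u. join E1 E2 (Inr b) u} = Inr ` {c. E2 b c} \<union> range Inl"
  proof (rule set_eqI)
    fix u :: "'a + 'b" show "u \<in> {u. join E1 E2 (Inr b) u} \<longleftrightarrow> u \<in> Inr ` {c. E2 b c} \<union> range Inl"
      by (cases u) (auto simp: join_def)
  qed
  have "card (Inr ` {c. E2 b c} \<union> range (Inl :: 'a \<Rightarrow> 'a + 'b)) = card ((Inr :: 'b \<Rightarrow> 'a + 'b) ` {c. E2 b c}) + card (range (Inl :: 'a \<Rightarrow> 'a + 'b))"
    by (rule card_Un_disjoint) auto
  hence "card {u. join E1 E2 (Inr b) u} = card ((Inr :: 'b \<Rightarrow> 'a + 'b) ` {c. E2 b c}) + card (range (Inl :: 'a \<Rightarrow> 'a + 'b))"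
    using seq by simp
  thus ?thesis by (simp add: degree_def card_image)
qed

definition Kc :: "('a::finite \<Rightarrow> 'a \<Rightarrow> bool) \<Rightarrow> real \<Rightarrow> real^'a^'a" where
  "Kc E c = (\<chi> a b. (if a = b then real (degree E a) + c else 0) - (if E a b then 1 else 0))"

lemma lap_join:
  fixes E1 :: "'a::finite \<Rightarrow> 'a \<Rightarrow> bool" and E2 :: "'b::finite \<Rightarrow> 'b \<Rightarrow> bool"
  shows "lap (join E1 E2) + Jm = blockm (Kc E1 (real CARD('b)) + Jm) (Kc E2 (real CARD('a)) + Jm)"
proof -
  have "(lap (join E1 E2) + Jm) $ i $ j = blockm (Kc E1 (real CARD('b)) + Jm) (Kc E2 (real CARD('a)) + Jm) $ i $ j" for i j
  proof (cases i; cases j)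
    fix a b assume "i = Inl a" "j = Inl b"
    thus ?thesis by (simp add: lap_def Jm_def blockm_def Kc_def join_def degree_join_Inl)
  next
    fix a b assume "i = Inl a" "j = Inr b"
    thus ?thesis by (simp add: lap_def Jm_def blockm_def Kc_def join_def)
  next
    fix a b assume "i = Inr a" "j = Inl b"
    thus ?thesis by (simp add: lap_def Jm_def blockm_def Kc_def join_def)
  next
    fix a b assume "i = Inr a" "j = Inr b"
    thus ?thesis by (simp add: lap_def Jm_def blockm_def Kc_def join_def degree_join_Inr)
  qed
  thus ?thesis by (simp add: vec_eq_iff)
qed

theorem theorem4p1:
  fixes E1 :: "'a::finite \<Rightarrow> 'a \<Rightarrow> bool" and E2 :: "'b::finite \<Rightarrow> 'b \<Rightarrow> bool"
    and V1 V2 :: "'a set" and V3 V4 :: "'b set"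
    and q1 q2 q3 q4 n1 n2 n3 n4 nu1 nu2 k1 k2 :: nat
    and lam mu :: "nat \<Rightarrow> real"
  assumes G1: "semiregular_bipartite E1 V1 V2 q1 q2"
    and G2: "semiregular_bipartite E2 V3 V4 q3 q4"
    and n1: "n1 = card V1" and n2: "n2 = card V2" and n12: "n1 \<le> n2"
    and n3: "n3 = card V3" and n4: "n4 = card V4" and n34: "n3 \<le> n4"
    and hnu1: "nu1 = n1 + n2" and hnu2: "nu2 = n3 + n4"
    and spec1: "spec E1 = (\<Sum>i\<in>{1..k1}. {#lam i, - lam i#}) + replicate_mset (nu1 - 2 * k1) 0"
    and spec2: "spec E2 = (\<Sum>j\<in>{1..k2}. {#mu j, - mu j#}) + replicate_mset (nu2 - 2 * k2) 0"
    and k1: "k1 \<ge> 1" and k2: "k2 \<ge> 1"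
    and lam1: "lam 1 = sqrt (real (q1 * q2))" and hmu1: "mu 1 = sqrt (real (q3 * q4))"
    and lam_mono: "\<forall>i j. 1 \<le> i \<and> i \<le> j \<and> j \<le> k1 \<longrightarrow> lam j \<le> lam i"
    and mu_mono: "\<forall>i j. 1 \<le> i \<and> i \<le> j \<and> j \<le> k2 \<longrightarrow> mu j \<le> mu i"
    and lam_pos: "\<forall>i\<in>{1..k1}. lam i > 0"
    and mu_pos: "\<forall>j\<in>{1..k2}. mu j > 0"
  shows "real (num_spanning_trees (join E1 E2)) =
     real (q1 + q2 + nu2) * real (q3 + q4 + nu1)
     * real (q1 + nu2) ^ (n1 - k1) * real (q2 + nu2) ^ (n2 - k1)
     * real (q3 + nu1) ^ (n3 - k2) * real (q4 + nu1) ^ (n4 - k2)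
     * (\<Prod>i\<in>{2..k1}. real (q1 + nu2) * real (q2 + nu2) - (lam i)\<^sup>2)
     * (\<Prod>j\<in>{2..k2}. real (q3 + nu1) * real (q4 + nu1) - (mu j)\<^sup>2)"
proof -
  note b1 = bip_facts[OF G1] and b2 = bip_facts[OF G2]
  have ca: "CARD('a) = nu1" using b1(6) n1 n2 hnu1 by simp
  have cb: "CARD('b) = nu2" using b2(6) n3 n4 hnu2 by simp
  have sp1: "spec E1 = (\<Sum>i\<in>{1..k1}. {#lam i, - lam i#}) + replicate_mset (CARD('a) - 2 * k1) 0"
    using spec1 ca by simp
  have sp2: "spec E2 = (\<Sum>i\<in>{1..k2}. {#mu i, - mu i#}) + replicate_mset (CARD('b) - 2 * k2) 0"
    using spec2 cb by simp
  have c1: "real CARD('b) > 0" by simp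
  have c2: "real CARD('a) > 0" by simp
  have X: "det (Kc E1 (real CARD('b)) + Jm) =
    (real CARD('a) + real CARD('b)) * (real q1 + real q2 + real CARD('b)) * (real q1 + real CARD('b)) ^ (card V1 - k1)
    * (real q2 + real CARD('b)) ^ (card V2 - k1)
    * (\<Prod>i\<in>{2..k1}. (real q1 + real CARD('b)) * (real q2 + real CARD('b)) - (lam i)\<^sup>2)"
    unfolding Kc_def by (rule partB[OF G1 sp1 _ lam_pos k1 lam1 c1]) (use n1 n2 n12 in simp)
  have Y: "det (Kc E2 (real CARD('a)) + Jm) =
    (real CARD('b) + real CARD('a)) * (real q3 + real q4 + real CARD('a)) * (real q3 + real CARD('a)) ^ (card V3 - k2)
    * (real q4 + real CARD('a)) ^ (card V4 - k2)
    * (\<Prod>i\<in>{2..k2}. (real q3 + real CARD('a)) * (real q4 + real CARD('a)) - (mu i)\<^sup>2)"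
    unfolding Kc_def by (rule partB[OF G2 sp2 _ mu_pos k2 hmu1 c2]) (use n3 n4 n34 in simp)
  have simple: "simple_graph (join E1 E2)" by (rule join_simple[OF b1(1) b2(1)])
  have "real CARD('a + 'b) ^ 2 * real (num_spanning_trees (join E1 E2)) = det (lap (join E1 E2) + Jm)"
    by (rule matrix_tree[OF simple, symmetric])
  also have "\<dots> = det (Kc E1 (real CARD('b)) + Jm) * det (Kc E2 (real CARD('a)) + Jm)"
    by (simp add: lap_join det_blockm)
  finally have main: "real CARD('a + 'b) ^ 2 * real (num_spanning_trees (join E1 E2)) =
     det (Kc E1 (real CARD('b)) + Jm) * det (Kc E2 (real CARD('a)) + Jm)" .
  have cab: "real CARD('a + 'b) = real nu1 + real nu2" using ca cb by (simp add: card_sum_type)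
  have pos: "real nu1 + real nu2 > 0" using ca c2 by simp
  define S1 where "S1 = real (q1 + q2 + nu2) * real (q1 + nu2) ^ (n1 - k1) * real (q2 + nu2) ^ (n2 - k1)
     * (\<Prod>i\<in>{2..k1}. real (q1 + nu2) * real (q2 + nu2) - (lam i)\<^sup>2)"
  define S2 where "S2 = real (q3 + q4 + nu1) * real (q3 + nu1) ^ (n3 - k2) * real (q4 + nu1) ^ (n4 - k2)
     * (\<Prod>j\<in>{2..k2}. real (q3 + nu1) * real (q4 + nu1) - (mu j)\<^sup>2)"
  define R where "R = real (q1 + q2 + nu2) * real (q3 + q4 + nu1)
     * real (q1 + nu2) ^ (n1 - k1) * real (q2 + nu2) ^ (n2 - k1)
     * real (q3 + nu1) ^ (n3 - k2) * real (q4 + nu1) ^ (n4 - k2)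
     * (\<Prod>i\<in>{2..k1}. real (q1 + nu2) * real (q2 + nu2) - (lam i)\<^sup>2)
     * (\<Prod>j\<in>{2..k2}. real (q3 + nu1) * real (q4 + nu1) - (mu j)\<^sup>2)"
  have RS: "R = S1 * S2" unfolding R_def S1_def S2_def by (simp only: mult_ac)
  have X': "det (Kc E1 (real CARD('b)) + Jm) = (real nu1 + real nu2) * S1"
    unfolding X S1_def using ca cb n1 n2 by (simp add: mult_ac)
  have Y': "det (Kc E2 (real CARD('a)) + Jm) = (real nu1 + real nu2) * S2"
    unfolding Y S2_def using ca cb n3 n4 by (simp add: mult_ac)
  have "(real nu1 + real nu2) ^ 2 * real (num_spanning_trees (join E1 E2)) = (real nu1 + real nu2) ^ 2 * R"
    using main unfolding X' Y' cab RS by (simp add: power2_eq_square mult_ac)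
  hence "real (num_spanning_trees (join E1 E2)) = R" using pos by simp
  thus ?thesis unfolding R_def .
qed


end
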